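(* In the setting described in the context, suppose that $S$ is Hilbert–Schmidt with $\|S-\hat S\|_{B_2}\le\epsilon_S$, and that $\hat P=\sum_{i,j=1}^n\theta^P_{ij}\mathring\phi_{x_i}\times\mathring\phi_{x_j}$ has coefficient matrix $\Theta_P$ satisfying $\mathrm{diag}(G_{xx^+}^\top\Theta_PG_{xx^+}-G_{xx}^\top\Theta_PG_{xx}-G_{xu}^\top\Theta_SG_{xu})\le0$ entrywise. Let $\hat v(x)=\langle\mathring\phi_x,\hat P\mathring\phi_x\rangle$ and $w(x,u)=\hat v(f(x,u))-\hat v(x)-s(h(x,u),u)$. Then $$\frac{w(x_i,u_i)}{|(x_i,u_i)|^2}\le\epsilon_S\rho(0)\quad\text{for all }i\text{ with }|(x_i,u_i)|\ne0.$$
   Context: Setting: system $x^+=f(x,u)$, $y=h(x,u)$ on bounded Lipschitz regions $\mathbb{X}\subset\mathbb{R}^{d_x}$, $\mathbb{U}\subset\mathbb{R}^{d_u}$ containing $0$, $f(0,0)=0$, $h(0,0)=0$, $f\in\mathring{C}^s(\mathbb{X}\times\mathbb{U},\mathbb{X})=\{\sum_{k=1}^{d_x+d_u}e_kf_k:f_k\in H^s(\mathbb{X}\times\mathbb{U},\mathbb{X})\}$ ($e_k(z)=z_k$, $H^s$ Sobolev) with $s\in\mathbb{N}$, $s>(d_x+d_u)/2$, and $\inf_{x,u}\lvert\mathrm{D}_xf(x,u)\rvert>0$. Kernels: $\rho:\mathbb{R}_+\to\mathbb{R}_+$ with $c_1(1+|\xi|^2)^{-s}\le|\hat\rho(\xi)|\le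 c_2(1+|\xi|^2)^{-s}$; $\mathring\kappa(x,x')=(x^\top x')\rho(|x-x'|)$, $\mathring\varkappa((x,u),(x',u'))=(x^\top x'+u^\top u')\rho(|(x,u)-(x',u')|)$, with RKHSs $\mathcal{H}_{\mathring\kappa}(\mathbb{X})$, $\mathcal{H}_{\mathring\varkappa}(\mathbb{X}\times\mathbb{U})$ and canonical features $\mathring\phi_x=\mathring\kappa(x,\cdot)$, $\mathring\varphi_{(x,u)}=\mathring\varkappa((x,u),(\cdot,\cdot))$. $S$ is a self-adjoint operator on $\mathcal{H}_{\mathring\varkappa}(\mathbb{X}\times\mathbb{U})$ with $s(h(x,u),u)=\langle\mathring\varphi_{(x,u)},S\mathring\varphi_{(x,u)}\rangle$ for all $(x,u)$. Data: $\{(x_i,u_i,x_i^+)\}_{i=1}^n$ with $x_i^+=f(x_i,u_i)$; $\hat S=\sum_{i,j=1}^n\theta^S_{ij}\mathring\varphi_{(x_i,u_i)}\times\mathring\varphi_{(x_j,u_j)}$, $\Theta_S=[\theta^S_{ij}]$; $G_{xx}=[\mathring\kappa(x_i,x_j)]$, $G_{xx^+}=[\mathring\kappa(x_i,x_j^+)]$, $G_{xu}=[\mathring\varkappa((x_i,u_i),(x_j,u_j))]$. $(g_1\times g_2)g_3=\langle g_2,g_3\rangle g_1$; $\|\cdot\|_{B_2}$ is the Hilbert–Schmidt norm. *)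

theory Defs
  imports "HOL-Analysis.Analysis"
begin

definition rank_one :: "'h::real_inner \<Rightarrow> 'h \<Rightarrow> 'h \<Rightarrow> 'h" where
  "rank_one g1 g2 = (\<lambda>g3. inner g2 g3 *\<^sub>R g1)"

definition coeff_op :: "nat \<Rightarrow> (nat \<Rightarrow> nat \<Rightarrow> real) \<Rightarrow> (nat \<Rightarrow> 'h::real_inner) \<Rightarrow> 'h \<Rightarrow> 'h" where
  "coeff_op n \<Theta> g = (\<lambda>v. \<Sum>i<n. \<Sum>j<n. \<Theta> i j *\<^sub>R rank_one (g i) (g j) v)"

definition orthonormal_set :: "'h::real_inner set \<Rightarrow> bool" where
  "orthonormal_set E \<longleftrightarrow> (\<forall>e\<in>E. norm e = 1) \<and> pairwise orthogonal E"

text \<open>Hilbert--Schmidt norm: supremum over finite orthonormal families E of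
  (sum_{e in E} |T e|^2)^(1/2); for a Hilbert--Schmidt operator this equals
  (sum over an orthonormal basis of |T e|^2)^(1/2).\<close>
definition hs_norm :: "('h::real_inner \<Rightarrow> 'h) \<Rightarrow> real" where
  "hs_norm T = Sup {sqrt (\<Sum>e\<in>E. (norm (T e))\<^sup>2) | E. finite E \<and> orthonormal_set E}"

definition hilbert_schmidt :: "('h::real_inner \<Rightarrow> 'h) \<Rightarrow> bool" where
  "hilbert_schmidt T \<longleftrightarrow> bounded_linear T \<and>
     bdd_above {sqrt (\<Sum>e\<in>E. (norm (T e))\<^sup>2) | E. finite E \<and> orthonormal_set E}"

definition self_adjoint :: "('h::real_inner \<Rightarrow> 'h) \<Rightarrow> bool" where
  "self_adjoint T \<longleftrightarrow> bounded_linear T \<and> (\<forall>a b. inner (T a) b = inner a (T b))"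

text \<open>Kernel (z^T z') rho(|z - z'|), used both for \<kappa> on X and \<varkappa> on X \<times> U
  (for pairs, inner and norm on the product type are the Euclidean ones).\<close>
definition ring_kernel :: "(real \<Rightarrow> real) \<Rightarrow> 'a::real_inner \<Rightarrow> 'a \<Rightarrow> real" where
  "ring_kernel \<rho> z z' = inner z z' * \<rho> (norm (z - z'))"

text \<open>Canonical feature map of the RKHS of kernel k on domain D, realised in a
  Hilbert space 'h: reproducing inner products and dense span.\<close>
definition is_rkhs_feature :: "('a \<Rightarrow> 'a \<Rightarrow> real) \<Rightarrow> 'a set \<Rightarrow> ('a \<Rightarrow> 'h::{real_inner,complete_space}) \<Rightarrow> bool" where
  "is_rkhs_feature k D \<phi> \<longleftrightarrow> (\<forall>z\<in>D. \<forall>z'\<in>D. inner (\<phi> z) (\<phi> z') = k z z')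
     \<and> closure (span (\<phi> ` D)) = UNIV"

definition gram :: "('a \<Rightarrow> 'a \<Rightarrow> real) \<Rightarrow> (nat \<Rightarrow> 'a) \<Rightarrow> (nat \<Rightarrow> 'a) \<Rightarrow> nat \<Rightarrow> nat \<Rightarrow> real" where
  "gram k a b i j = k (a i) (b j)"

definition quad_diag :: "nat \<Rightarrow> (nat \<Rightarrow> nat \<Rightarrow> real) \<Rightarrow> (nat \<Rightarrow> nat \<Rightarrow> real) \<Rightarrow> nat \<Rightarrow> real" where
  "quad_diag n G \<Theta> i = (\<Sum>j<n. \<Sum>k<n. G j i * \<Theta> j k * G k i)"

end

theory Submission
  imports Defs
begin

lemma bessel:
  fixes b :: "'h::real_inner"
  assumes fin: "finite E" and on: "orthonormal_set E"
  shows "(\<Sum>e\<in>E. (inner b e)\<^sup>2) \<le> (norm b)\<^sup>2"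
proof -
  define p where "p = (\<Sum>e\<in>E. inner b e *\<^sub>R e)"
  have ee: "inner e e' = (if e = e' then 1 else 0)" if "e \<in> E" "e' \<in> E" for e e'
    using on that unfolding orthonormal_set_def pairwise_def orthogonal_def
    by (auto simp: norm_eq_sqrt_inner)
  have pp: "inner p p = (\<Sum>e\<in>E. (inner b e)\<^sup>2)"
  proof -
    have "inner p p = (\<Sum>e\<in>E. \<Sum>e'\<in>E. inner b e * inner b e' * inner e' e)"
      unfolding p_def by (simp add: inner_sum_left inner_sum_right mult.assoc sum_distrib_left)
    also have "\<dots> = (\<Sum>e\<in>E. \<Sum>e'\<in>E. if e = e' then inner b e * inner b e' else 0)"
      by (intro sum.cong refl) (simp add: ee)
    also have "\<dots> = (\<Sum>e\<in>E. (inner b e)\<^sup>2)"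
      using fin by (simp add: sum.delta power2_eq_square)
    finally show ?thesis .
  qed
  have bp: "inner b p = (\<Sum>e\<in>E. (inner b e)\<^sup>2)"
    unfolding p_def by (simp add: inner_sum_right power2_eq_square)
  have "0 \<le> inner (b - p) (b - p)" by simp
  also have "\<dots> = (norm b)\<^sup>2 - 2 * inner b p + inner p p"
    by (simp add: inner_diff_left inner_diff_right inner_commute power2_norm_eq_inner)
  finally show ?thesis using pp bp by simp
qed

lemma L2_sum:
  assumes "finite I"
  shows "L2_set (\<lambda>e. norm (\<Sum>i\<in>I. F i e :: 'h::real_normed_vector)) E
        \<le> (\<Sum>i\<in>I. L2_set (\<lambda>e. norm (F i e)) E)"
  using assms
proof (induction I rule: finite_induct)
  case empty then show ?case by (simp add: L2_set_def)
next
  case (insert a I)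
  have "L2_set (\<lambda>e. norm (\<Sum>i\<in>insert a I. F i e)) E
     \<le> L2_set (\<lambda>e. norm (F a e) + norm (\<Sum>i\<in>I. F i e)) E"
    using insert by (intro L2_set_mono) (auto simp: norm_triangle_ineq)
  also have "\<dots> \<le> L2_set (\<lambda>e. norm (F a e)) E + L2_set (\<lambda>e. norm (\<Sum>i\<in>I. F i e)) E"
    by (rule L2_set_triangle_ineq)
  also have "\<dots> \<le> L2_set (\<lambda>e. norm (F a e)) E + (\<Sum>i\<in>I. L2_set (\<lambda>e. norm (F i e)) E)"
    using insert by simp
  finally show ?case using insert by simp
qed

lemma L2_rank:
  fixes a b :: "'h::real_inner"
  assumes fin: "finite E" and on: "orthonormal_set E"
  shows "L2_set (\<lambda>e. norm (c *\<^sub>R rank_one a b e)) E \<le> \<bar>c\<bar> * norm a * norm b"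
proof -
  have "L2_set (\<lambda>e. norm (c *\<^sub>R rank_one a b e)) E = L2_set (\<lambda>e. (\<bar>c\<bar> * norm a) * \<bar>inner b e\<bar>) E"
    by (simp add: rank_one_def abs_mult mult_ac)
  also have "\<dots> = (\<bar>c\<bar> * norm a) * L2_set (\<lambda>e. \<bar>inner b e\<bar>) E"
    by (simp add: L2_set_right_distrib)
  finally have eq: "L2_set (\<lambda>e. norm (c *\<^sub>R rank_one a b e)) E = (\<bar>c\<bar> * norm a) * L2_set (\<lambda>e. \<bar>inner b e\<bar>) E" .
  have l2b: "L2_set (\<lambda>e. \<bar>inner b e\<bar>) E \<le> norm b"
  proof -
    have "sqrt (\<Sum>e\<in>E. (\<bar>inner b e\<bar>)\<^sup>2) \<le> sqrt ((norm b)\<^sup>2)"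
      using bessel[OF fin on, of b] by (intro real_sqrt_le_mono) simp
    then show ?thesis unfolding L2_set_def by simp
  qed
  then have "(\<bar>c\<bar> * norm a) * L2_set (\<lambda>e. \<bar>inner b e\<bar>) E \<le> (\<bar>c\<bar> * norm a) * norm b"
    by (intro mult_left_mono) auto
  then show ?thesis using eq by simp
qed

theorem corollary4:
  fixes X :: "'x::euclidean_space set" and U :: "'u::euclidean_space set"
    and f :: "'x \<Rightarrow> 'u \<Rightarrow> 'x" and h :: "'x \<Rightarrow> 'u \<Rightarrow> 'y::euclidean_space"
    and s :: "'y \<Rightarrow> 'u \<Rightarrow> real"
    and \<rho> :: "real \<Rightarrow> real"
    and \<phi> :: "'x \<Rightarrow> 'hx::{real_inner,complete_space}"
    and \<phi>xu :: "'x \<times> 'u \<Rightarrow> 'hxu::{real_inner,complete_space}"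
    and S :: "'hxu \<Rightarrow> 'hxu"
    and n :: nat and xs :: "nat \<Rightarrow> 'x" and us :: "nat \<Rightarrow> 'u" and xps :: "nat \<Rightarrow> 'x"
    and \<Theta>S \<Theta>P :: "nat \<Rightarrow> nat \<Rightarrow> real" and \<epsilon>S :: real
  assumes X: "open X" "bounded X" "0 \<in> X"
    and U: "open U" "bounded U" "0 \<in> U"
    and f_maps: "\<forall>x\<in>X. \<forall>u\<in>U. f x u \<in> X"
    and f0: "f 0 0 = 0" and h0: "h 0 0 = 0"
    and rho_nonneg: "\<forall>r\<ge>0. \<rho> r \<ge> 0"
    and feat_x: "is_rkhs_feature (ring_kernel \<rho>) X \<phi>"
    and feat_xu: "is_rkhs_feature (ring_kernel \<rho>) (X \<times> U) \<phi>xu"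
    and S_sa: "self_adjoint S"
    and S_s: "\<forall>x\<in>X. \<forall>u\<in>U. s (h x u) u = inner (\<phi>xu (x, u)) (S (\<phi>xu (x, u)))"
    and S_hs: "hilbert_schmidt S"
    and data: "\<forall>i<n. xs i \<in> X \<and> us i \<in> U \<and> xps i = f (xs i) (us i)"
    and S_err: "hs_norm (\<lambda>g. S g - coeff_op n \<Theta>S (\<lambda>i. \<phi>xu (xs i, us i)) g) \<le> \<epsilon>S"
    and LMI: "\<forall>i<n. quad_diag n (gram (ring_kernel \<rho>) xs xps) \<Theta>P i
                  - quad_diag n (gram (ring_kernel \<rho>) xs xs) \<Theta>P i
                  - quad_diag n (gram (ring_kernel \<rho>) (\<lambda>i. (xs i, us i)) (\<lambda>i. (xs i, us i))) \<Theta>S i \<le> 0"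
  shows "let vhat = (\<lambda>x. inner (\<phi> x) (coeff_op n \<Theta>P (\<lambda>i. \<phi> (xs i)) (\<phi> x)));
             w = (\<lambda>x u. vhat (f x u) - vhat x - s (h x u) u)
         in \<forall>i<n. norm (xs i, us i) \<noteq> 0 \<longrightarrow>
              w (xs i) (us i) / (norm (xs i, us i))\<^sup>2 \<le> \<epsilon>S * \<rho> 0"
proof -
  define z where "z i = (xs i, us i)" for i
  define g where "g i = \<phi>xu (z i)" for i
  define Sh where "Sh = coeff_op n \<Theta>S g"
  define T where "T = (\<lambda>v. S v - Sh v)"
  have gdef: "(\<lambda>i. \<phi>xu (xs i, us i)) = g" by (rule ext) (simp add: g_def z_def)
  have ksym: "ring_kernel \<rho> a b = ring_kernel \<rho> b a" for a b :: "'a::real_inner"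
    unfolding ring_kernel_def by (simp add: inner_commute norm_minus_commute)
  have coeff_eval: "inner v (coeff_op m \<Theta> q v) = (\<Sum>j<m. \<Sum>k<m. inner v (q j) * \<Theta> j k * inner (q k) v)"
    for m \<Theta> and q :: "nat \<Rightarrow> 'b::real_inner" and v
    unfolding coeff_op_def rank_one_def by (simp add: inner_sum_right mult_ac)
  have Sh_lin: "Sh (c *\<^sub>R v) = c *\<^sub>R Sh v" for c v
    unfolding Sh_def coeff_op_def rank_one_def by (simp add: scaleR_sum_right mult_ac)
  have S_lin: "S (c *\<^sub>R v) = c *\<^sub>R S v" for c v
    using S_sa unfolding self_adjoint_def by (simp add: linear_simps)
  have T_lin: "T (c *\<^sub>R v) = c *\<^sub>R T v" for c v
    unfolding T_def by (simp add: Sh_lin S_lin scaleR_diff_right)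
  obtain B where B: "\<And>E. finite E \<Longrightarrow> orthonormal_set E \<Longrightarrow> sqrt (\<Sum>e\<in>E. (norm (S e))\<^sup>2) \<le> B"
    using S_hs unfolding hilbert_schmidt_def bdd_above_def by blast
  define C where "C = (\<Sum>i<n. \<Sum>j<n. \<bar>\<Theta>S i j\<bar> * norm (g i) * norm (g j))"
  have TB: "sqrt (\<Sum>e\<in>E. (norm (T e))\<^sup>2) \<le> B + C" if fin: "finite E" and on: "orthonormal_set E" for E
  proof -
    have "sqrt (\<Sum>e\<in>E. (norm (T e))\<^sup>2) = L2_set (\<lambda>e. norm (T e)) E" by (simp add: L2_set_def)
    also have "\<dots> \<le> L2_set (\<lambda>e. norm (S e) + norm (Sh e)) E"
      unfolding T_def by (intro L2_set_mono) (auto intro: norm_triangle_ineq4)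
    also have "\<dots> \<le> L2_set (\<lambda>e. norm (S e)) E + L2_set (\<lambda>e. norm (Sh e)) E"
      by (rule L2_set_triangle_ineq)
    also have "L2_set (\<lambda>e. norm (S e)) E \<le> B"
      using B[OF fin on] by (simp add: L2_set_def)
    also have "L2_set (\<lambda>e. norm (Sh e)) E \<le> C"
    proof -
      have "L2_set (\<lambda>e. norm (Sh e)) E \<le> (\<Sum>i<n. L2_set (\<lambda>e. norm (\<Sum>j<n. \<Theta>S i j *\<^sub>R rank_one (g i) (g j) e)) E)"
        unfolding Sh_def coeff_op_def by (rule L2_sum) simp
      also have "\<dots> \<le> (\<Sum>i<n. \<Sum>j<n. L2_set (\<lambda>e. norm (\<Theta>S i j *\<^sub>R rank_one (g i) (g j) e)) E)"
        by (intro sum_mono L2_sum) simp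
      also have "\<dots> \<le> C"
        unfolding C_def by (intro sum_mono L2_rank fin on)
      finally show ?thesis .
    qed
    finally show ?thesis by simp
  qed
  have bdd: "bdd_above {sqrt (\<Sum>e\<in>E. (norm (T e))\<^sup>2) | E. finite E \<and> orthonormal_set E}"
    unfolding bdd_above_def using TB by blast
  have hsT: "hs_norm T \<le> \<epsilon>S"
    using S_err unfolding T_def Sh_def gdef .
  have key: "- inner (g i) (T (g i)) \<le> \<epsilon>S * (norm (g i))\<^sup>2" for i
  proof (cases "g i = 0")
    case True then show ?thesis by simp
  next
    case False
    define e where "e = (1 / norm (g i)) *\<^sub>R g i"
    have ne: "norm e = 1" using False by (simp add: e_def)
    have on: "orthonormal_set {e}" using ne by (simp add: orthonormal_set_def)
    have "norm (T e) = sqrt (\<Sum>e\<in>{e}. (norm (T e))\<^sup>2)" by simp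
    also have "\<dots> \<le> hs_norm T"
      unfolding hs_norm_def by (rule cSup_upper[OF _ bdd]) (use on in blast)
    finally have Te: "norm (T e) \<le> \<epsilon>S" using hsT by simp
    have gi: "g i = norm (g i) *\<^sub>R e" using False by (simp add: e_def)
    have "T (g i) = norm (g i) *\<^sub>R T e" by (subst gi, rule T_lin)
    then have nT: "norm (T (g i)) \<le> norm (g i) * \<epsilon>S"
      using Te by (simp add: mult_left_mono)
    have "- inner (g i) (T (g i)) \<le> norm (g i) * norm (T (g i))"
      using Cauchy_Schwarz_ineq2[of "g i" "T (g i)"] by simp
    also have "\<dots> \<le> norm (g i) * (norm (g i) * \<epsilon>S)"
      using nT by (simp add: mult_left_mono)
    finally show ?thesis by (simp add: power2_eq_square mult_ac)
  qed
  show ?thesis unfolding Let_def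
  proof (intro allI impI)
    fix i assume i: "i < n" and nz: "norm (xs i, us i) \<noteq> 0"
    have xi: "xs i \<in> X" "us i \<in> U" "xps i = f (xs i) (us i)" using data i by auto
    have xpi: "xps i \<in> X" using f_maps xi by auto
    have xsX: "\<And>j. j < n \<Longrightarrow> xs j \<in> X" "\<And>j. j < n \<Longrightarrow> us j \<in> U" using data by auto
    have kx: "inner (\<phi> a) (\<phi> b) = ring_kernel \<rho> a b" if "a \<in> X" "b \<in> X" for a b
      using feat_x that unfolding is_rkhs_feature_def by blast
    have kxu: "inner (g a) (g b) = ring_kernel \<rho> (z a) (z b)" if "a < n" "b < n" for a b
      using feat_xu that xsX unfolding is_rkhs_feature_def g_def z_def by auto
    have vh: "inner (\<phi> x) (coeff_op n \<Theta>P (\<lambda>i. \<phi> (xs i)) (\<phi> x)) = quad_diag n (gram (ring_kernel \<rho>) xs (\<lambda>_. x)) \<Theta>P 0"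
      if "x \<in> X" for x
      unfolding coeff_eval quad_diag_def gram_def
      by (intro sum.cong refl) (simp add: kx that xsX ksym[of x])
    have q1: "quad_diag n (gram (ring_kernel \<rho>) xs (\<lambda>_. x)) \<Theta>P 0 = quad_diag n (gram (ring_kernel \<rho>) xs ys) \<Theta>P i"
      if "ys i = x" for x ys
      unfolding quad_diag_def gram_def using that by simp
    have sh: "inner (g i) (Sh (g i)) = quad_diag n (gram (ring_kernel \<rho>) z z) \<Theta>S i"
      unfolding Sh_def coeff_eval quad_diag_def gram_def
      by (intro sum.cong refl) (simp add: kxu i ksym[of "z i"])
    have zz: "(\<lambda>i. (xs i, us i)) = z" by (rule ext) (simp add: z_def)
    have lmi: "quad_diag n (gram (ring_kernel \<rho>) xs xps) \<Theta>P i - quad_diag n (gram (ring_kernel \<rho>) xs xs) \<Theta>P i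
        - inner (g i) (Sh (g i)) \<le> 0"
      using LMI i unfolding sh zz by auto
    have si: "s (h (xs i) (us i)) (us i) = inner (g i) (S (g i))"
      using S_s xi by (simp add: g_def z_def)
    have ng: "(norm (g i))\<^sup>2 = (norm (xs i, us i))\<^sup>2 * \<rho> 0"
      using kxu[OF i i] by (simp add: power2_norm_eq_inner ring_kernel_def z_def)
    define W where "W = inner (\<phi> (f (xs i) (us i))) (coeff_op n \<Theta>P (\<lambda>i. \<phi> (xs i)) (\<phi> (f (xs i) (us i))))
        - inner (\<phi> (xs i)) (coeff_op n \<Theta>P (\<lambda>i. \<phi> (xs i)) (\<phi> (xs i))) - s (h (xs i) (us i)) (us i)"
    have W1: "W = quad_diag n (gram (ring_kernel \<rho>) xs xps) \<Theta>P i - quad_diag n (gram (ring_kernel \<rho>) xs xs) \<Theta>P i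
        - inner (g i) (S (g i))"
      unfolding W_def si using vh[OF xpi] vh[OF xi(1)] q1[of xps "xps i"] q1[of xs "xs i"] xi(3) by simp
    have "W \<le> - inner (g i) (T (g i))"
      using W1 lmi unfolding T_def by (simp add: inner_diff_right)
    also have "\<dots> \<le> \<epsilon>S * ((norm (xs i, us i))\<^sup>2 * \<rho> 0)" using key[of i] ng by simp
    finally have "W \<le> \<epsilon>S * \<rho> 0 * (norm (xs i, us i))\<^sup>2" by (simp add: mult_ac)
    then show "W / (norm (xs i, us i))\<^sup>2 \<le> \<epsilon>S * \<rho> 0"
      using nz by (simp add: divide_le_eq)
  qed
qed

end
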